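(* For any $q\ge 1$, the simplicial complex $\mathbb{M}_q^2$ is a simplicial tree.
   Context: $\mathbb{M}_q^2$: vertex set $\{\ell_{i,j}:1\le i\le j\le q\}$, $\mathcal{M}=\{\ell_{i,j}:1\le i<j\le q\}$, $\mathcal{M}_i=\mathcal{M}\cup\{\ell_{i,i}\}$, and $\mathbb{M}_q^2$ is the simplicial complex whose facets are $\mathcal{M}_1,\ldots,\mathcal{M}_q$. A subcollection of a simplicial complex $\Delta$ is a subcomplex whose facets are facets of $\Delta$. $\Delta$ is connected if any two facets $F,G$ are joined by a sequence of facets $F=F_0,\ldots,F_r=G$ with $F_{k-1}\cap F_k\neq\emptyset$. A facet $F$ is a leaf if it is the only facet, or there is a facet $G\neq F$ with $F\cap H\subseteq G$ for all facets $H\neq F$. $\Delta$ is a simplicial forest if every subcollection has a leaf, and a simplicial tree if it is a connected simplicial forest. *)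

theory Defs
  imports Main
begin

text \<open>A simplicial complex is represented by its set of facets (a set of vertex sets).
  Subcollections are given by nonempty subsets of the facet set.\<close>

definition is_leaf :: "'v set set \<Rightarrow> 'v set \<Rightarrow> bool" where
  "is_leaf Fs F \<longleftrightarrow> F \<in> Fs \<and>
     (Fs = {F} \<or> (\<exists>G\<in>Fs. G \<noteq> F \<and> (\<forall>H\<in>Fs. H \<noteq> F \<longrightarrow> F \<inter> H \<subseteq> G)))"

definition facet_connected :: "'v set set \<Rightarrow> bool" where
  "facet_connected Fs \<longleftrightarrow> (\<forall>F\<in>Fs. \<forall>G\<in>Fs. \<exists>xs. xs \<noteq> [] \<and> hd xs = F \<and> last xs = G \<and>
      set xs \<subseteq> Fs \<and> (\<forall>k. Suc k < length xs \<longrightarrow> xs ! k \<inter> xs ! Suc k \<noteq> {}))"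

definition simplicial_forest :: "'v set set \<Rightarrow> bool" where
  "simplicial_forest Fs \<longleftrightarrow> (\<forall>Ss. Ss \<subseteq> Fs \<and> Ss \<noteq> {} \<longrightarrow> (\<exists>F\<in>Ss. is_leaf Ss F))"

definition simplicial_tree :: "'v set set \<Rightarrow> bool" where
  "simplicial_tree Fs \<longleftrightarrow> facet_connected Fs \<and> simplicial_forest Fs"

text \<open>Vertex \<ell>_{i,j} is the pair (i,j).\<close>
definition M_set :: "nat \<Rightarrow> (nat \<times> nat) set" where
  "M_set q = {(i, j). 1 \<le> i \<and> i < j \<and> j \<le> q}"

definition M_facet :: "nat \<Rightarrow> nat \<Rightarrow> (nat \<times> nat) set" where
  "M_facet q i = insert (i, i) (M_set q)"

definition Mq2 :: "nat \<Rightarrow> (nat \<times> nat) set set" where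
  "Mq2 q = {M_facet q i | i. 1 \<le> i \<and> i \<le> q}"

end

theory Submission
  imports Defs
begin

lemma diag_notin: "(i, i) \<notin> M_set q"
  by (simp add: M_set_def)

lemma inter_facets:
  assumes "F \<in> Mq2 q" "H \<in> Mq2 q" "F \<noteq> H"
  shows "F \<inter> H = M_set q"
proof -
  obtain i where i: "F = M_facet q i" using assms(1) by (auto simp: Mq2_def)
  obtain j where j: "H = M_facet q j" using assms(2) by (auto simp: Mq2_def)
  have "i \<noteq> j" using i j assms(3) by auto
  then show ?thesis using i j by (auto simp: M_facet_def M_set_def)
qed

lemma facet_M: "F \<in> Mq2 q \<Longrightarrow> M_set q \<subseteq> F"
  by (auto simp: Mq2_def M_facet_def)

theorem proposition3p3:
  fixes q :: nat
  assumes "q \<ge> 1"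
  shows "simplicial_tree (Mq2 q)"
  unfolding simplicial_tree_def
proof
  show "facet_connected (Mq2 q)"
    unfolding facet_connected_def
  proof (intro ballI)
    fix F G assume F: "F \<in> Mq2 q" and G: "G \<in> Mq2 q"
    show "\<exists>xs. xs \<noteq> [] \<and> hd xs = F \<and> last xs = G \<and>
      set xs \<subseteq> Mq2 q \<and> (\<forall>k. Suc k < length xs \<longrightarrow> xs ! k \<inter> xs ! Suc k \<noteq> {})"
    proof (cases "F = G")
      case True
      then show ?thesis using F by (intro exI[of _ "[F]"]) auto
    next
      case False
      obtain i where i: "F = M_facet q i" "1 \<le> i" "i \<le> q" using F by (auto simp: Mq2_def)
      obtain j where j: "G = M_facet q j" "1 \<le> j" "j \<le> q" using G by (auto simp: Mq2_def)
      have "i \<noteq> j" using False i j by auto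
      hence "q \<ge> 2" using i j by linarith
      hence "(1, 2) \<in> M_set q" by (simp add: M_set_def)
      hence ne: "F \<inter> G \<noteq> {}" using inter_facets[OF F G False] by auto
      show ?thesis using F G ne
        by (intro exI[of _ "[F, G]"]) (auto simp: less_Suc_eq)
    qed
  qed
next
  show "simplicial_forest (Mq2 q)"
    unfolding simplicial_forest_def
  proof (intro allI impI)
    fix Ss assume Ss: "Ss \<subseteq> Mq2 q \<and> Ss \<noteq> {}"
    then obtain F where F: "F \<in> Ss" by auto
    show "\<exists>F\<in>Ss. is_leaf Ss F"
    proof (cases "Ss = {F}")
      case True
      then show ?thesis using F by (auto simp: is_leaf_def)
    next
      case False
      then obtain G where G: "G \<in> Ss" "G \<noteq> F" using F by auto
      have "\<forall>H\<in>Ss. H \<noteq> F \<longrightarrow> F \<inter> H \<subseteq> G"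
      proof (intro ballI impI)
        fix H assume "H \<in> Ss" "H \<noteq> F"
        hence "F \<inter> H = M_set q" using inter_facets[of F q H] Ss F by auto
        thus "F \<inter> H \<subseteq> G" using facet_M[of G q] G Ss by auto
      qed
      then show ?thesis using F G unfolding is_leaf_def by blast
    qed
  qed
qed

end
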